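(* Let $m$ be a positive integer, $r\geq 1$ and $\mathbf{p}=(p_1,\dots,p_m),\mathbf{q}=(q_1,\dots,q_m)\in[1,\infty]^m$. Suppose that either (a) $q_k\geq p_k$ for $k=1,\dots,m$ and $\frac1r-\left|\frac1{\mathbf{p}}\right|+\left|\frac1{\mathbf{q}}\right|>0$, or (b) $q_k\geq p_k$ for $k=2,\dots,m$, $q_1>p_1$, and $\frac1r-\left|\frac1{\mathbf{p}}\right|+\left|\frac1{\mathbf{q}}\right|\geq 0$. Define $\mathbf{s}=(s_1,\dots,s_m)$ by \[ \frac1{s_k}-\left|\frac1{\mathbf{q}}\right|_{\geq k}=\frac1r-\left|\frac1{\mathbf{p}}\right|_{\geq k},\qquad k=1,\dots,m, \] and assume $\mathbf{s}\in[1,\infty]^m$. Then for all Banach spaces $X_1,\dots,X_m,Y$ over $\mathbb{K}$, \[ \Pi^m_{(r;\mathbf{p})}(X_1,\dots,X_m;Y)\subset\Pi^m_{(\mathbf{s};\mathbf{q})}(X_1,\dots,X_m;Y), \] and the inclusion operator has norm $1$, i.e. $\pi_{(\mathbf{s};\mathbf{q})}(T)\le \pi_{(r;\mathbf{p})}(T)$ for every $T$ in the first space.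
   Context: $\mathbb{K}=\mathbb{R}$ or $\mathbb{C}$; $1/\infty:=0$. For $\mathbf{p}\in[1,\infty]^m$, $\left|\frac1{\mathbf{p}}\right|_{\geq k}:=\frac1{p_k}+\cdots+\frac1{p_m}$ and $\left|\frac1{\mathbf{p}}\right|:=\left|\frac1{\mathbf{p}}\right|_{\geq1}$. For a finite sequence $(x_j)_{j=1}^n$ in a Banach space $X$ and $p\in[1,\infty]$, $\|(x_j)_{j=1}^n\|_{w,p}:=\sup_{\varphi\in B_{X^*}}\|(\varphi(x_j))_{j=1}^n\|_{\ell_p}$. For $\mathbf{r}\in[1,\infty]^m$, $\mathbf{p}\in[1,\infty]^m$, a continuous $m$-linear map $T:X_1\times\cdots\times X_m\to Y$ is multiple $(\mathbf{r};\mathbf{p})$-summing if there is $C>0$ such that for all $n$ and all sequences $(x^{(k)}_j)_{j=1}^n\subset X_k$, \[ \left(\sum_{j_1=1}^n\left(\cdots\left(\sum_{j_m=1}^n\|T(x^{(1)}_{j_1},\dots,x^{(m)}_{j_m})\|^{r_m}\right)^{\frac{r_{m-1}}{r_m}}\cdots\right)^{\frac{r_1}{r_2}}\right)^{\frac1{r_1}}\le C\prod_{k=1}^m\|(x^{(k)}_j)_{j=1}^n\|_{w,p_k}, \] where any sum with exponent $\infty$ is replaced by a supremum. The space of such maps is $\Pi^m_{(\mathbf{r};\mathbf{p})}(X_1,\dots,X_m;Y)$, with norm $\pi_{(\mathbf{r};\mathbf{p})}(T)$ equal to the infimum of such $C$; when $r_1=\cdots=r_m=r$ one writes $(r;\mathbf{p})$.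 *)

theory Defs
  imports "HOL-Analysis.Analysis"
begin

text \<open>Exponents in [1,\<infinity>] are extended reals; 1/\<infinity> := 0.\<close>
definition einv :: "ereal \<Rightarrow> real" where
  "einv p = (if p = \<infinity> then 0 else 1 / real_of_ereal p)"

definition invsum_from :: "(nat \<Rightarrow> ereal) \<Rightarrow> nat \<Rightarrow> nat \<Rightarrow> real" where
  "invsum_from p m k = (\<Sum>i=k..m. einv (p i))"

definition lpnorm :: "ereal \<Rightarrow> nat \<Rightarrow> (nat \<Rightarrow> real) \<Rightarrow> real" where
  "lpnorm p n a = (if p = \<infinity> then Max (insert 0 ((\<lambda>j. \<bar>a j\<bar>) ` {1..n}))
      else (\<Sum>j=1..n. \<bar>a j\<bar> powr real_of_ereal p) powr (1 / real_of_ereal p))"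

text \<open>A normed \<bbbK>-space structure on a real Banach type is given by a scalar action
  sm (only its values on \<bbbK> matter), compatible with the real structure.\<close>
definition is_scalar_field :: "complex set \<Rightarrow> bool" where
  "is_scalar_field K \<longleftrightarrow> K = \<real> \<or> K = UNIV"

definition K_space :: "complex set \<Rightarrow> (complex \<Rightarrow> 'a::real_normed_vector \<Rightarrow> 'a) \<Rightarrow> bool" where
  "K_space K sm \<longleftrightarrow>
     (\<forall>c\<in>K. \<forall>x y. sm c (x + y) = sm c x + sm c y) \<and>
     (\<forall>c\<in>K. \<forall>d\<in>K. \<forall>x. sm (c + d) x = sm c x + sm d x) \<and>
     (\<forall>c\<in>K. \<forall>d\<in>K. \<forall>x. sm (c * d) x = sm c (sm d x)) \<and>
     (\<forall>a::real. \<forall>x. sm (complex_of_real a) x = a *\<^sub>R x) \<and>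
     (\<forall>c\<in>K. \<forall>x. norm (sm c x) = cmod c * norm x)"

text \<open>A Banach space over \<bbbK>: a closed \<bbbK>-linear subspace of a real Banach type.\<close>
definition K_banach_subspace ::
  "complex set \<Rightarrow> (complex \<Rightarrow> 'a::banach \<Rightarrow> 'a) \<Rightarrow> 'a set \<Rightarrow> bool" where
  "K_banach_subspace K sm V \<longleftrightarrow> 0 \<in> V \<and> (\<forall>x\<in>V. \<forall>y\<in>V. x + y \<in> V) \<and>
     (\<forall>c\<in>K. \<forall>x\<in>V. sm c x \<in> V) \<and> closed V"

definition dual_ball ::
  "complex set \<Rightarrow> (complex \<Rightarrow> 'a::real_normed_vector \<Rightarrow> 'a) \<Rightarrow> 'a set \<Rightarrow> ('a \<Rightarrow> complex) set" where
  "dual_ball K sm V = {\<phi>. (\<forall>x\<in>V. \<phi> x \<in> K) \<and>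
     (\<forall>x\<in>V. \<forall>y\<in>V. \<phi> (x + y) = \<phi> x + \<phi> y) \<and>
     (\<forall>c\<in>K. \<forall>x\<in>V. \<phi> (sm c x) = c * \<phi> x) \<and>
     (\<forall>x\<in>V. cmod (\<phi> x) \<le> norm x)}"

definition wnorm ::
  "complex set \<Rightarrow> (complex \<Rightarrow> 'a::real_normed_vector \<Rightarrow> 'a) \<Rightarrow> 'a set \<Rightarrow> ereal \<Rightarrow> nat \<Rightarrow> (nat \<Rightarrow> 'a) \<Rightarrow> real" where
  "wnorm K sm V p n x = Sup ((\<lambda>\<phi>. lpnorm p n (\<lambda>j. cmod (\<phi> (x j)))) ` dual_ball K sm V)"

definition multilinear_on ::
  "complex set \<Rightarrow> (complex \<Rightarrow> 'a::real_normed_vector \<Rightarrow> 'a) \<Rightarrow> (complex \<Rightarrow> 'b::real_normed_vector \<Rightarrow> 'b)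
   \<Rightarrow> nat \<Rightarrow> (nat \<Rightarrow> 'a set) \<Rightarrow> ((nat \<Rightarrow> 'a) \<Rightarrow> 'b) \<Rightarrow> bool" where
  "multilinear_on K smX smY m V T \<longleftrightarrow>
     (\<forall>x\<in>PiE {1..m} V. \<forall>k\<in>{1..m}. \<forall>y\<in>V k.
        T (x(k := x k + y)) = T x + T (x(k := y))) \<and>
     (\<forall>x\<in>PiE {1..m} V. \<forall>k\<in>{1..m}. \<forall>c\<in>K.
        T (x(k := smX c (x k))) = smY c (T x))"

definition cont_multilinear ::
  "complex set \<Rightarrow> (complex \<Rightarrow> 'a::real_normed_vector \<Rightarrow> 'a) \<Rightarrow> (complex \<Rightarrow> 'b::real_normed_vector \<Rightarrow> 'b)
   \<Rightarrow> nat \<Rightarrow> (nat \<Rightarrow> 'a set) \<Rightarrow> ((nat \<Rightarrow> 'a) \<Rightarrow> 'b) \<Rightarrow> bool" where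
  "cont_multilinear K smX smY m V T \<longleftrightarrow>
     multilinear_on K smX smY m V T \<and> continuous_on (PiE {1..m} V) T"

text \<open>Iterated mixed norm: mixnorm r n m d F J applies the \<ell>_{r_k}-norms for the
  last d levels k = m-d+1, ..., m (innermost k = m), with indices j_1..j_{m-d} fixed in J.
  mixnorm r n m m F J is the left-hand side of the multiple summing inequality.\<close>
fun mixnorm :: "(nat \<Rightarrow> ereal) \<Rightarrow> nat \<Rightarrow> nat \<Rightarrow> nat \<Rightarrow> ((nat \<Rightarrow> nat) \<Rightarrow> real) \<Rightarrow> (nat \<Rightarrow> nat) \<Rightarrow> real" where
  "mixnorm r n m 0 F J = F J"
| "mixnorm r n m (Suc d) F J =
     lpnorm (r (m - d)) n (\<lambda>j. mixnorm r n m d F (J(m - d := j)))"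

definition summing_consts ::
  "complex set \<Rightarrow> (complex \<Rightarrow> 'a::real_normed_vector \<Rightarrow> 'a) \<Rightarrow> nat \<Rightarrow> (nat \<Rightarrow> 'a set)
   \<Rightarrow> (nat \<Rightarrow> ereal) \<Rightarrow> (nat \<Rightarrow> ereal) \<Rightarrow> ((nat \<Rightarrow> 'a) \<Rightarrow> 'b::real_normed_vector) \<Rightarrow> real set" where
  "summing_consts K smX m V r p T = {C. C > 0 \<and>
     (\<forall>n. \<forall>x::nat \<Rightarrow> nat \<Rightarrow> 'a. (\<forall>k\<in>{1..m}. \<forall>j\<in>{1..n}. x k j \<in> V k) \<longrightarrow>
        mixnorm r n m m (\<lambda>J. norm (T (\<lambda>k\<in>{1..m}. x k (J k)))) (\<lambda>_. 0)
          \<le> C * (\<Prod>k=1..m. wnorm K smX (V k) (p k) n (x k)))}"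

definition multiple_summing ::
  "complex set \<Rightarrow> (complex \<Rightarrow> 'a::real_normed_vector \<Rightarrow> 'a) \<Rightarrow> (complex \<Rightarrow> 'b::real_normed_vector \<Rightarrow> 'b)
   \<Rightarrow> nat \<Rightarrow> (nat \<Rightarrow> 'a set) \<Rightarrow> (nat \<Rightarrow> ereal) \<Rightarrow> (nat \<Rightarrow> ereal) \<Rightarrow> ((nat \<Rightarrow> 'a) \<Rightarrow> 'b) \<Rightarrow> bool" where
  "multiple_summing K smX smY m V r p T \<longleftrightarrow>
     cont_multilinear K smX smY m V T \<and> summing_consts K smX m V r p T \<noteq> {}"

definition pi_norm ::
  "complex set \<Rightarrow> (complex \<Rightarrow> 'a::real_normed_vector \<Rightarrow> 'a) \<Rightarrow> nat \<Rightarrow> (nat \<Rightarrow> 'a set)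
   \<Rightarrow> (nat \<Rightarrow> ereal) \<Rightarrow> (nat \<Rightarrow> ereal) \<Rightarrow> ((nat \<Rightarrow> 'a) \<Rightarrow> 'b::real_normed_vector) \<Rightarrow> real" where
  "pi_norm K smX m V r p T = Inf (summing_consts K smX m V r p T)"

end

theory Submission
  imports Defs
begin


lemma lpnorm_fin: "lpnorm (ereal s) n a = (\<Sum>j=1..n. \<bar>a j\<bar> powr s) powr (1/s)"
  by (simp add: lpnorm_def)

lemma lpnorm_inf: "lpnorm \<infinity> n a = Max (insert 0 ((\<lambda>j. \<bar>a j\<bar>) ` {1..n}))"
  by (simp add: lpnorm_def)

lemma lpnorm_nonneg: "0 \<le> lpnorm p n a"
  unfolding lpnorm_def by (auto intro: Max_ge)

lemma lpnorm_inf_ge: "j \<in> {1..n} \<Longrightarrow> \<bar>a j\<bar> \<le> lpnorm \<infinity> n a"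
  unfolding lpnorm_inf by (rule Max_ge) auto

lemma lpnorm_inf_le: "0 \<le> M \<Longrightarrow> (\<forall>j\<in>{1..n}. \<bar>a j\<bar> \<le> M) \<Longrightarrow> lpnorm \<infinity> n a \<le> M"
  unfolding lpnorm_inf by (subst Max_le_iff) auto

lemma lpnorm_cong: "(\<forall>j\<in>{1..n}. \<bar>a j\<bar> = \<bar>b j\<bar>) \<Longrightarrow> lpnorm p n a = lpnorm p n b"
  unfolding lpnorm_def by (auto intro!: sum.cong arg_cong[where f=Max] image_cong)

lemma ereal_ge1_cases:
  assumes "p \<ge> (1::ereal)"
  obtains "p = \<infinity>" | s where "p = ereal s" "s \<ge> 1"
  using assms by (cases p) auto

lemma lpnorm_mono:
  assumes p: "p \<ge> 1" and le: "\<forall>j\<in>{1..n}. \<bar>a j\<bar> \<le> \<bar>b j\<bar>"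
  shows "lpnorm p n a \<le> lpnorm p n b"
  using p
proof (cases rule: ereal_ge1_cases)
  case 1
  then show ?thesis using le
    by (metis lpnorm_inf_ge lpnorm_inf_le lpnorm_nonneg order.trans)
next
  case (2 s)
  have "(\<Sum>j=1..n. \<bar>a j\<bar> powr s) \<le> (\<Sum>j=1..n. \<bar>b j\<bar> powr s)"
    using le 2 by (intro sum_mono powr_mono2) auto
  then show ?thesis using 2
    by (simp add: lpnorm_fin powr_mono2 sum_nonneg)
qed

lemma lpnorm_scale:
  assumes p: "p \<ge> 1"
  shows "lpnorm p n (\<lambda>j. c * a j) = \<bar>c\<bar> * lpnorm p n a"
  using p
proof (cases rule: ereal_ge1_cases)
  case 1
  show ?thesis
  proof (rule antisym)
    show "lpnorm p n (\<lambda>j. c * a j) \<le> \<bar>c\<bar> * lpnorm p n a"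
      unfolding 1 by (rule lpnorm_inf_le)
        (auto simp: abs_mult lpnorm_nonneg intro!: mult_left_mono lpnorm_inf_ge)
    show "\<bar>c\<bar> * lpnorm p n a \<le> lpnorm p n (\<lambda>j. c * a j)"
    proof (cases "c = 0")
      case True then show ?thesis by (simp add: lpnorm_nonneg)
    next
      case False
      have "lpnorm p n a \<le> lpnorm p n (\<lambda>j. c * a j) / \<bar>c\<bar>"
        unfolding 1
      proof (rule lpnorm_inf_le)
        show "0 \<le> lpnorm \<infinity> n (\<lambda>j. c * a j) / \<bar>c\<bar>" by (simp add: lpnorm_nonneg)
        show "\<forall>j\<in>{1..n}. \<bar>a j\<bar> \<le> lpnorm \<infinity> n (\<lambda>j. c * a j) / \<bar>c\<bar>"
        proof
          fix j assume "j \<in> {1..n}"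
          then have "\<bar>c * a j\<bar> \<le> lpnorm \<infinity> n (\<lambda>j. c * a j)" by (rule lpnorm_inf_ge)
          then show "\<bar>a j\<bar> \<le> lpnorm \<infinity> n (\<lambda>j. c * a j) / \<bar>c\<bar>"
            using False by (simp add: abs_mult pos_le_divide_eq mult.commute)
        qed
      qed
      then show ?thesis using False by (simp add: pos_le_divide_eq mult.commute)
    qed
  qed
next
  case (2 s)
  have "(\<Sum>j=1..n. \<bar>c * a j\<bar> powr s) = \<bar>c\<bar> powr s * (\<Sum>j=1..n. \<bar>a j\<bar> powr s)"
    by (simp add: abs_mult powr_mult sum_distrib_left)
  then show ?thesis using 2
    by (simp add: lpnorm_fin powr_mult sum_nonneg powr_powr)
qed



lemma holder_sum:
  fixes u v :: "'a \<Rightarrow> real"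
  assumes A: "finite A" and ab: "0 \<le> \<alpha>" "0 \<le> \<beta>" "\<alpha> + \<beta> = 1"
    and u: "\<forall>i\<in>A. 0 \<le> u i" and v: "\<forall>i\<in>A. 0 \<le> v i"
  shows "(\<Sum>i\<in>A. u i powr \<alpha> * v i powr \<beta>) \<le> (\<Sum>i\<in>A. u i) powr \<alpha> * (\<Sum>i\<in>A. v i) powr \<beta>"
proof -
  define U where "U = (\<Sum>i\<in>A. u i)"
  define W where "W = (\<Sum>i\<in>A. v i)"
  have U0: "U \<ge> 0" "W \<ge> 0" unfolding U_def W_def using u v by (simp_all add: sum_nonneg)
  show ?thesis
  proof (cases "U = 0 \<or> W = 0")
    case True
    then have "\<forall>i\<in>A. u i powr \<alpha> * v i powr \<beta> = 0"
      using u v A by (auto simp: U_def W_def sum_nonneg_eq_0_iff)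
    then have "(\<Sum>i\<in>A. u i powr \<alpha> * v i powr \<beta>) = 0" by (auto intro!: sum.neutral)
    then show ?thesis by (simp add: U_def[symmetric] W_def[symmetric])
  next
    case False
    then have Up: "U > 0" "W > 0" using U0 by auto
    have "\<forall>i\<in>A. (u i / U) powr \<alpha> * (v i / W) powr \<beta> \<le> \<alpha> * (u i / U) + \<beta> * (v i / W)"
    proof
      fix i assume i: "i \<in> A"
      show "(u i / U) powr \<alpha> * (v i / W) powr \<beta> \<le> \<alpha> * (u i / U) + \<beta> * (v i / W)"
      proof (cases "u i = 0 \<or> v i = 0")
        case True then show ?thesis using u v i ab Up by auto
      next
        case False
        then have "u i / U > 0" "v i / W > 0" using u v i Up by auto
        then show ?thesis using Youngs_inequality_0[OF ab] by blast
      qed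
    qed
    then have "(\<Sum>i\<in>A. (u i / U) powr \<alpha> * (v i / W) powr \<beta>) \<le> (\<Sum>i\<in>A. \<alpha> * (u i / U) + \<beta> * (v i / W))"
      by (intro sum_mono) blast
    also have "\<dots> = \<alpha> * (\<Sum>i\<in>A. u i) / U + \<beta> * (\<Sum>i\<in>A. v i) / W"
      by (simp add: sum.distrib sum_distrib_left sum_divide_distrib)
    also have "\<dots> = 1" using Up ab by (simp add: U_def[symmetric] W_def[symmetric])
    finally have 1: "(\<Sum>i\<in>A. (u i / U) powr \<alpha> * (v i / W) powr \<beta>) \<le> 1" .
    have "(\<Sum>i\<in>A. (u i / U) powr \<alpha> * (v i / W) powr \<beta>)
        = (\<Sum>i\<in>A. u i powr \<alpha> * v i powr \<beta>) / (U powr \<alpha> * W powr \<beta>)"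
      using u v Up by (simp add: powr_divide sum_divide_distrib)
    with 1 have "(\<Sum>i\<in>A. u i powr \<alpha> * v i powr \<beta>) / (U powr \<alpha> * W powr \<beta>) \<le> 1" by simp
    moreover have "U powr \<alpha> * W powr \<beta> > 0" using Up by simp
    ultimately have "(\<Sum>i\<in>A. u i powr \<alpha> * v i powr \<beta>) \<le> U powr \<alpha> * W powr \<beta>"
      by (simp add: divide_le_eq)
    then show ?thesis by (simp add: U_def W_def)
  qed
qed



lemma einv_inf[simp]: "einv \<infinity> = 0" by (simp add: einv_def)
lemma einv_fin[simp]: "einv (ereal s) = 1 / s" by (simp add: einv_def)
lemma einv_nonneg: "p \<ge> 1 \<Longrightarrow> einv p \<ge> 0"
  by (cases rule: ereal_ge1_cases) auto
lemma einv_le1: "p \<ge> 1 \<Longrightarrow> einv p \<le> 1"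
  by (cases rule: ereal_ge1_cases) auto
lemma einv_zero_iff: "p \<ge> 1 \<Longrightarrow> einv p = 0 \<longleftrightarrow> p = \<infinity>"
  by (cases rule: ereal_ge1_cases) auto
lemma einv_inj: "p \<ge> 1 \<Longrightarrow> q \<ge> 1 \<Longrightarrow> einv p = einv q \<Longrightarrow> p = q"
  by (cases p rule: ereal_ge1_cases; cases q rule: ereal_ge1_cases) auto
lemma einv_mono: assumes "p \<ge> 1" "q \<ge> p" shows "einv q \<le> einv p"
proof -
  have "q \<ge> 1" using assms by (metis order.trans)
  show ?thesis
    apply (rule ereal_ge1_cases[OF assms(1)]; rule ereal_ge1_cases[OF \<open>q \<ge> 1\<close>])
    using assms by (auto simp: frac_le)
qed

lemma lpnorm_holder:
  assumes p: "p \<ge> 1" and t: "t \<ge> 1" and q: "q \<ge> 1"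
    and e: "einv p = einv t + einv q"
  shows "lpnorm p n (\<lambda>j. f j * g j) \<le> lpnorm t n f * lpnorm q n g"
  using p
proof (cases rule: ereal_ge1_cases)
  case 1
  then have "einv t = 0" "einv q = 0" using e einv_nonneg[OF t] einv_nonneg[OF q] by auto
  then have tq: "t = \<infinity>" "q = \<infinity>" using einv_zero_iff t q by auto
  show ?thesis unfolding 1 tq
  proof (rule lpnorm_inf_le)
    show "0 \<le> lpnorm \<infinity> n f * lpnorm \<infinity> n g" by (simp add: lpnorm_nonneg)
    show "\<forall>j\<in>{1..n}. \<bar>f j * g j\<bar> \<le> lpnorm \<infinity> n f * lpnorm \<infinity> n g"
      by (auto simp: abs_mult intro!: mult_mono lpnorm_inf_ge lpnorm_nonneg)
  qed
next
  case (2 s)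
  show ?thesis
  proof (cases "t = \<infinity>")
    case True
    then have "einv q = einv p" using e by simp
    then have qp: "q = p" using einv_inj p q by auto
    have "lpnorm p n (\<lambda>j. f j * g j) \<le> lpnorm p n (\<lambda>j. lpnorm t n f * g j)"
      using p True by (intro lpnorm_mono) (auto simp: abs_mult lpnorm_nonneg intro!: mult_right_mono lpnorm_inf_ge)
    also have "\<dots> = lpnorm t n f * lpnorm q n g"
      using p qp by (simp add: lpnorm_scale lpnorm_nonneg)
    finally show ?thesis .
  next
    case tfin: False
    show ?thesis
    proof (cases "q = \<infinity>")
      case True
      then have "einv t = einv p" using e by simp
      then have tp: "t = p" using einv_inj p t by auto
      have "lpnorm p n (\<lambda>j. f j * g j) \<le> lpnorm p n (\<lambda>j. lpnorm q n g * f j)"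
        using p True by (intro lpnorm_mono) (auto simp: abs_mult lpnorm_nonneg mult.commute intro!: mult_left_mono lpnorm_inf_ge)
      also have "\<dots> = lpnorm t n f * lpnorm q n g"
        using p tp by (simp add: lpnorm_scale lpnorm_nonneg)
      finally show ?thesis .
    next
      case False
      obtain a where a: "t = ereal a" "a \<ge> 1" using t tfin by (cases rule: ereal_ge1_cases) auto
      obtain b where b: "q = ereal b" "b \<ge> 1" using q False by (cases rule: ereal_ge1_cases) auto
      have sab: "1/s = 1/a + 1/b" using e 2 a b by simp
      have s1: "s / a + s / b = 1" using sab 2 by (simp add: field_simps)
      have "(\<Sum>j=1..n. \<bar>f j * g j\<bar> powr s)
          = (\<Sum>j=1..n. (\<bar>f j\<bar> powr a) powr (s/a) * (\<bar>g j\<bar> powr b) powr (s/b))"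
        using a b by (simp add: powr_powr abs_mult powr_mult)
      also have "\<dots> \<le> (\<Sum>j=1..n. \<bar>f j\<bar> powr a) powr (s/a) * (\<Sum>j=1..n. \<bar>g j\<bar> powr b) powr (s/b)"
        using 2 a b s1 by (intro holder_sum) auto
      finally have le: "(\<Sum>j=1..n. \<bar>f j * g j\<bar> powr s)
         \<le> (\<Sum>j=1..n. \<bar>f j\<bar> powr a) powr (s/a) * (\<Sum>j=1..n. \<bar>g j\<bar> powr b) powr (s/b)" .
      have "lpnorm p n (\<lambda>j. f j * g j) = (\<Sum>j=1..n. \<bar>f j * g j\<bar> powr s) powr (1/s)"
        using 2 by (simp add: lpnorm_fin)
      also have "\<dots> \<le> ((\<Sum>j=1..n. \<bar>f j\<bar> powr a) powr (s/a) * (\<Sum>j=1..n. \<bar>g j\<bar> powr b) powr (s/b)) powr (1/s)"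
        using le 2 by (intro powr_mono2) (auto intro: sum_nonneg)
      also have "\<dots> = (\<Sum>j=1..n. \<bar>f j\<bar> powr a) powr (1/a) * (\<Sum>j=1..n. \<bar>g j\<bar> powr b) powr (1/b)"
        using 2 a b by (simp add: powr_mult powr_powr sum_nonneg)
      also have "\<dots> = lpnorm t n f * lpnorm q n g"
        using a b by (simp add: lpnorm_fin)
      finally show ?thesis .
    qed
  qed
qed



lemma lpnorm_delta:
  assumes t: "t \<ge> 1" and j: "j \<in> {1..n}"
  shows "lpnorm t n (\<lambda>i. if i = j then 1 else 0) = 1"
  using t
proof (cases rule: ereal_ge1_cases)
  case 1
  show ?thesis unfolding 1
  proof (rule antisym)
    show "lpnorm \<infinity> n (\<lambda>i. if i = j then 1 else 0) \<le> 1"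
      by (rule lpnorm_inf_le) auto
    show "1 \<le> lpnorm \<infinity> n (\<lambda>i. if i = j then 1 else 0::real)"
      using lpnorm_inf_ge[OF j, of "\<lambda>i. if i = j then 1 else 0::real"] by simp
  qed
next
  case (2 s)
  have "(\<Sum>i=1..n. \<bar>if i = j then 1 else 0::real\<bar> powr s) = (\<Sum>i=1..n. if i = j then 1 else 0)"
    by (intro sum.cong) auto
  also have "\<dots> = 1" using j by simp
  finally show ?thesis using 2 by (simp add: lpnorm_fin)
qed

lemma lpnorm_dual:
  assumes a: "a \<ge> 1" and s: "s \<ge> 1" and t: "t \<ge> 1"
    and e: "1 / a = einv s + einv t"
    and G: "\<forall>j\<in>{1..n}. 0 \<le> G j" and B: "B \<ge> 0"
    and hyp: "\<And>\<mu>. (\<forall>j. 0 \<le> \<mu> j) \<Longrightarrow> lpnorm (ereal a) n (\<lambda>j. \<mu> j * G j) \<le> B * lpnorm t n \<mu>"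
  shows "lpnorm s n G \<le> B"
  using s
proof (cases rule: ereal_ge1_cases)
  case 1
  show ?thesis unfolding 1
  proof (rule lpnorm_inf_le[OF B], rule ballI)
    fix j assume j: "j \<in> {1..n}"
    define \<mu> where "\<mu> = (\<lambda>i. if i = j then 1 else 0::real)"
    have "lpnorm (ereal a) n (\<lambda>i. \<mu> i * G i) = (\<Sum>i=1..n. if i = j then \<bar>G j\<bar> powr a else 0) powr (1/a)"
      unfolding lpnorm_fin \<mu>_def by (intro arg_cong2[where f="(powr)"] sum.cong) auto
    also have "\<dots> = \<bar>G j\<bar>" using j a by (simp add: powr_powr)
    finally have "\<bar>G j\<bar> \<le> B * lpnorm t n \<mu>" using hyp[of \<mu>] by (simp add: \<mu>_def)
    then show "\<bar>G j\<bar> \<le> B" using lpnorm_delta[OF t j] by (simp add: \<mu>_def)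
  qed
next
  case (2 \<sigma>)
  show ?thesis
  proof (cases "t = \<infinity>")
    case True
    then have "a = \<sigma>" using e 2 a by (simp add: field_simps)
    have "lpnorm (ereal a) n (\<lambda>j. 1 * G j) \<le> B * lpnorm t n (\<lambda>_. 1)" by (rule hyp) simp
    also have "\<dots> \<le> B * 1"
      using True by (intro mult_left_mono B) (simp add: lpnorm_inf_le)
    finally show ?thesis using 2 \<open>a = \<sigma>\<close> by simp
  next
    case False
    obtain \<tau> where \<tau>: "t = ereal \<tau>" "\<tau> \<ge> 1" using t False by (cases rule: ereal_ge1_cases) auto
    have ea: "1/a = 1/\<sigma> + 1/\<tau>" using e 2 \<tau> by simp
    have key: "(\<sigma>/\<tau> + 1) * a = \<sigma>"
    proof -
      have "a = \<sigma> * \<tau> / (\<sigma> + \<tau>)" using ea a 2 \<tau> by (simp add: field_simps)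
      then show ?thesis using 2 \<tau> by (simp add: field_simps)
    qed
    define \<mu> where "\<mu> = (\<lambda>j. G j powr (\<sigma>/\<tau>))"
    define S where "S = (\<Sum>j=1..n. \<bar>G j\<bar> powr \<sigma>)"
    have S0: "S \<ge> 0" unfolding S_def by (simp add: sum_nonneg)
    have t1: "\<bar>\<mu> j * G j\<bar> powr a = \<bar>G j\<bar> powr \<sigma>" if j: "j \<in> {1..n}" for j
    proof (cases "G j = 0")
      case True then show ?thesis using 2 a by (simp add: \<mu>_def)
    next
      case False
      then have Gp: "G j > 0" using G j by force
      have "\<mu> j * G j = G j powr (\<sigma>/\<tau> + 1)" using Gp by (simp add: \<mu>_def powr_add)
      then have "\<bar>\<mu> j * G j\<bar> powr a = G j powr ((\<sigma>/\<tau> + 1) * a)" using Gp by (simp add: powr_powr)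
      then show ?thesis using key Gp by simp
    qed
    have t2: "\<bar>\<mu> j\<bar> powr \<tau> = \<bar>G j\<bar> powr \<sigma>" if j: "j \<in> {1..n}" for j
      using G j \<tau> by (simp add: \<mu>_def powr_powr)
    have "(\<Sum>j=1..n. \<bar>\<mu> j * G j\<bar> powr a) = S"
      unfolding S_def using t1 by (intro sum.cong) auto
    then have L: "lpnorm (ereal a) n (\<lambda>j. \<mu> j * G j) = S powr (1/a)"
      by (simp add: lpnorm_fin)
    have "(\<Sum>j=1..n. \<bar>\<mu> j\<bar> powr \<tau>) = S"
      unfolding S_def using t2 by (intro sum.cong) auto
    then have R: "lpnorm t n \<mu> = S powr (1/\<tau>)"
      by (simp add: lpnorm_fin \<tau>)
    have LS: "lpnorm s n G = S powr (1/\<sigma>)" by (simp add: lpnorm_fin 2 S_def)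
    have "S powr (1/a) \<le> B * S powr (1/\<tau>)"
      using hyp[of \<mu>] L R by (simp add: \<mu>_def)
    show ?thesis
    proof (cases "S = 0")
      case True then show ?thesis using B LS by simp
    next
      case False
      then have Sp: "S > 0" using S0 by simp
      have "S powr (1/a) = S powr (1/\<sigma>) * S powr (1/\<tau>)" using ea by (simp add: powr_add[symmetric])
      with \<open>S powr (1/a) \<le> B * S powr (1/\<tau>)\<close> have "S powr (1/\<sigma>) \<le> B" using Sp by simp
      then show ?thesis using LS by simp
    qed
  qed
qed



lemma sum_powr_mono_exp:
  fixes w :: "'a \<Rightarrow> real"
  assumes A: "finite A" and bc: "0 < b" "b \<le> c" and w: "\<forall>i\<in>A. 0 \<le> w i"
  shows "(\<Sum>i\<in>A. w i powr c) powr (1/c) \<le> (\<Sum>i\<in>A. w i powr b) powr (1/b)"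
proof -
  define N where "N = (\<Sum>i\<in>A. w i powr b) powr (1/b)"
  have SN: "(\<Sum>i\<in>A. w i powr b) = N powr b"
    using bc by (simp add: N_def powr_powr sum_nonneg)
  show ?thesis
  proof (cases "N = 0")
    case True
    then have "(\<Sum>i\<in>A. w i powr b) = 0" using SN by simp
    then have "\<forall>i\<in>A. w i powr b = 0" using A by (simp add: sum_nonneg_eq_0_iff)
    then have "\<forall>i\<in>A. w i powr c = 0" by simp
    then have "(\<Sum>i\<in>A. w i powr c) = 0" by simp
    then show ?thesis by (simp add: N_def[symmetric] True)
  next
    case False
    then have Np: "N > 0" by (simp add: N_def)
    have wle: "w i \<le> N" if i: "i \<in> A" for i
    proof -
      have "w i powr b \<le> (\<Sum>i\<in>A. w i powr b)"
        using A i by (intro member_le_sum) auto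
      then have "w i powr b \<le> N powr b" using SN by simp
      then show ?thesis using powr_less_mono2[of b N "w i"] bc w i Np by force
    qed
    have "(\<Sum>i\<in>A. (w i / N) powr c) \<le> (\<Sum>i\<in>A. (w i / N) powr b)"
      using wle w Np bc by (intro sum_mono powr_mono') auto
    also have "\<dots> = (\<Sum>i\<in>A. w i powr b) / N powr b"
      using w Np by (simp add: powr_divide sum_divide_distrib)
    also have "\<dots> = 1" using SN Np by simp
    finally have "(\<Sum>i\<in>A. w i powr c) / N powr c \<le> 1"
      using w Np by (simp add: powr_divide sum_divide_distrib)
    then have "(\<Sum>i\<in>A. w i powr c) \<le> N powr c" using Np by (simp add: divide_le_eq)
    then have "(\<Sum>i\<in>A. w i powr c) powr (1/c) \<le> (N powr c) powr (1/c)"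
      using bc by (intro powr_mono2) (auto intro: sum_nonneg)
    then show ?thesis using bc Np by (simp add: powr_powr N_def[symmetric])
  qed
qed



lemma mixnorm_nonneg: "(\<forall>J. 0 \<le> F J) \<Longrightarrow> 0 \<le> mixnorm r n m d F J"
  by (cases d) (auto simp: lpnorm_nonneg)

lemma mixnorm_cong_r:
  "d \<le> m \<Longrightarrow> (\<forall>l. m - d < l \<and> l \<le> m \<longrightarrow> r l = r' l) \<Longrightarrow> mixnorm r n m d F J = mixnorm r' n m d F J"
proof (induction d arbitrary: J)
  case 0 then show ?case by simp
next
  case (Suc d)
  have "r (m - d) = r' (m - d)" using Suc.prems by auto
  moreover have "mixnorm r n m d F J' = mixnorm r' n m d F J'" for J'
    using Suc.prems by (intro Suc.IH) auto
  ultimately show ?case by simp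
qed

lemma mixnorm_cong_F:
  "d \<le> m \<Longrightarrow> (\<forall>J'. (\<forall>l. m - d < l \<and> l \<le> m \<longrightarrow> J' l \<in> {1..n}) \<and>
      (\<forall>l. \<not> (m - d < l \<and> l \<le> m) \<longrightarrow> J' l = J l) \<longrightarrow> F J' = F' J')
   \<Longrightarrow> mixnorm r n m d F J = mixnorm r n m d F' J"
proof (induction d arbitrary: J)
  case 0
  then show ?case by auto
next
  case (Suc d)
  have "\<forall>j\<in>{1..n}. mixnorm r n m d F (J(m - d := j)) = mixnorm r n m d F' (J(m - d := j))"
  proof
    fix j assume j: "j \<in> {1..n}"
    show "mixnorm r n m d F (J(m - d := j)) = mixnorm r n m d F' (J(m - d := j))"
    proof (rule Suc.IH)
      show "d \<le> m" using Suc.prems by simp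
      show "\<forall>J'. (\<forall>l. m - d < l \<and> l \<le> m \<longrightarrow> J' l \<in> {1..n}) \<and>
          (\<forall>l. \<not> (m - d < l \<and> l \<le> m) \<longrightarrow> J' l = (J(m - d := j)) l) \<longrightarrow> F J' = F' J'"
      proof (intro allI impI)
        fix J' assume A: "(\<forall>l. m - d < l \<and> l \<le> m \<longrightarrow> J' l \<in> {1..n}) \<and>
          (\<forall>l. \<not> (m - d < l \<and> l \<le> m) \<longrightarrow> J' l = (J(m - d := j)) l)"
        have "\<forall>l. m - Suc d < l \<and> l \<le> m \<longrightarrow> J' l \<in> {1..n}"
        proof (intro allI impI)
          fix l assume l: "m - Suc d < l \<and> l \<le> m"
          show "J' l \<in> {1..n}"
          proof (cases "l = m - d")
            case True
            then have "J' l = j" using A Suc.prems by auto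
            then show ?thesis using j by simp
          next
            case False then show ?thesis using A l by auto
          qed
        qed
        moreover have "\<forall>l. \<not> (m - Suc d < l \<and> l \<le> m) \<longrightarrow> J' l = J l"
          using A Suc.prems by auto
        ultimately show "F J' = F' J'" using Suc.prems(2) by blast
      qed
    qed
  qed
  then show ?case by (simp add: lpnorm_cong)
qed

lemma mixnorm_factor:
  assumes "d \<le> m"
    and "\<forall>J j l. m - d < l \<and> l \<le> m \<longrightarrow> c (J(l := j)) = c J"
    and "\<forall>J. 0 \<le> c J"
    and "\<forall>l. m - d < l \<and> l \<le> m \<longrightarrow> r l \<ge> 1"
  shows "mixnorm r n m d (\<lambda>J. c J * F J) J = c J * mixnorm r n m d F J"
  using assms
proof (induction d arbitrary: J)
  case 0 then show ?case by simp
next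
  case (Suc d)
  have IH: "mixnorm r n m d (\<lambda>J. c J * F J) J' = c J' * mixnorm r n m d F J'" for J'
    by (rule Suc.IH) (use Suc.prems in auto)
  have "mixnorm r n m (Suc d) (\<lambda>J. c J * F J) J
      = lpnorm (r (m - d)) n (\<lambda>j. c (J(m - d := j)) * mixnorm r n m d F (J(m - d := j)))"
    by (simp add: IH)
  also have "\<dots> = lpnorm (r (m - d)) n (\<lambda>j. c J * mixnorm r n m d F (J(m - d := j)))"
  proof -
    have "c (J(m - d := j)) = c J" for j
    proof -
      have "m - Suc d < m - d \<and> m - d \<le> m" using Suc.prems(1) by arith
      then show ?thesis using Suc.prems(2) by blast
    qed
    then show ?thesis by simp
  qed
  also have "\<dots> = c J * mixnorm r n m (Suc d) F J"
    using Suc.prems by (simp add: lpnorm_scale)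
  finally show ?case .
qed



lemma sum_PiE_insert:
  assumes "a \<notin> A" "finite A" "\<forall>i. finite (B i)"
  shows "(\<Sum>g\<in>PiE (insert a A) B. f g) = (\<Sum>y\<in>B a. \<Sum>g\<in>PiE A B. f (g(a := y)))"
proof -
  have "(\<Sum>g\<in>PiE (insert a A) B. f g) = (\<Sum>p\<in>B a \<times> PiE A B. f ((\<lambda>(y, g). g(a := y)) p))"
    unfolding PiE_insert_eq using inj_combinator[OF assms(1)] by (rule sum.reindex_cong) auto
  also have "\<dots> = (\<Sum>y\<in>B a. \<Sum>g\<in>PiE A B. f (g(a := y)))"
    by (simp add: sum.cartesian_product split_def)
  finally show ?thesis .
qed

definition updJ :: "(nat \<Rightarrow> nat) \<Rightarrow> nat \<Rightarrow> (nat \<Rightarrow> nat) \<Rightarrow> nat \<Rightarrow> nat" where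
  "updJ J c J' = (\<lambda>l. if l \<in> {1..c} then J' l else J l)"

lemma updJ_0[simp]: "updJ J 0 J' = J"
  by (simp add: updJ_def)

lemma updJ_Suc: "(updJ J c J')(Suc c := j) = updJ J (Suc c) (J'(Suc c := j))"
  by (auto simp: updJ_def)

lemma lpnorm_powr:
  assumes "\<sigma> > 0" "\<forall>j. 0 \<le> g j"
  shows "lpnorm (ereal \<sigma>) n g powr \<sigma> = (\<Sum>j=1..n. g j powr \<sigma>)"
  using assms by (simp add: lpnorm_fin powr_powr sum_nonneg)

lemma mixnorm_uniform:
  assumes "c \<le> m" "\<sigma> > 0" "\<forall>l. 1 \<le> l \<and> l \<le> c \<longrightarrow> r l = ereal \<sigma>" "\<forall>J. 0 \<le> F J"
  shows "mixnorm r n m m F J powr \<sigma> =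
     (\<Sum>J'\<in>PiE {1..c} (\<lambda>_. {1..n}). mixnorm r n m (m - c) F (updJ J c J') powr \<sigma>)"
  using assms
proof (induction c)
  case 0 then show ?case by simp
next
  case (Suc c)
  have IH: "mixnorm r n m m F J powr \<sigma> =
     (\<Sum>J'\<in>PiE {1..c} (\<lambda>_. {1..n}). mixnorm r n m (m - c) F (updJ J c J') powr \<sigma>)"
    using Suc.prems by (intro Suc.IH) auto
  have mc: "m - c = Suc (m - Suc c)" "m - (m - Suc c) = Suc c" using Suc.prems(1) by auto
  have rc: "r (Suc c) = ereal \<sigma>" using Suc.prems(3) by auto
  have step: "mixnorm r n m (m - c) F K powr \<sigma> = (\<Sum>j=1..n. mixnorm r n m (m - Suc c) F (K(Suc c := j)) powr \<sigma>)" for K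
    unfolding mc(1) using mc(2) rc Suc.prems(2,4)
    by (simp add: lpnorm_powr mixnorm_nonneg)
  have "mixnorm r n m m F J powr \<sigma> =
     (\<Sum>J'\<in>PiE {1..c} (\<lambda>_. {1..n}). \<Sum>j=1..n. mixnorm r n m (m - Suc c) F (updJ J (Suc c) (J'(Suc c := j))) powr \<sigma>)"
    unfolding IH step updJ_Suc ..
  also have "\<dots> = (\<Sum>j=1..n. \<Sum>J'\<in>PiE {1..c} (\<lambda>_. {1..n}). mixnorm r n m (m - Suc c) F (updJ J (Suc c) (J'(Suc c := j))) powr \<sigma>)"
    by (rule sum.swap)
  also have "\<dots> = (\<Sum>J'\<in>PiE {1..Suc c} (\<lambda>_. {1..n}). mixnorm r n m (m - Suc c) F (updJ J (Suc c) J') powr \<sigma>)"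
  proof -
    have "{1..Suc c} = insert (Suc c) {1..c}" by auto
    then show ?thesis by (simp add: sum_PiE_insert)
  qed
  finally show ?case .
qed



definition claim where
  "claim s' t n m a J0 B k \<longleftrightarrow> (\<forall>\<Lambda>. (\<forall>l j. 0 \<le> \<Lambda> l j) \<longrightarrow>
     mixnorm (\<lambda>l. if l \<le> k then s' k else s' l) n m m (\<lambda>J. (\<Prod>l\<in>{1..<k}. \<Lambda> l (J l)) * a J) J0
       \<le> B * (\<Prod>l\<in>{1..<k}. lpnorm (t l) n (\<Lambda> l)))"

lemma prod_insert_k:
  assumes "k \<ge> (1::nat)"
  shows "(\<Prod>l\<in>{1..<Suc k}. (\<Lambda>(k := \<mu>)) l (J l)) = (\<Prod>l\<in>{1..<k}. \<Lambda> l (J l)) * \<mu> (J k)"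
proof -
  have "{1..<Suc k} = insert k {1..<k}" using assms by auto
  then have "(\<Prod>l\<in>{1..<Suc k}. (\<Lambda>(k := \<mu>)) l (J l)) = \<mu> (J k) * (\<Prod>l\<in>{1..<k}. (\<Lambda>(k := \<mu>)) l (J l))"
    by simp
  also have "(\<Prod>l\<in>{1..<k}. (\<Lambda>(k := \<mu>)) l (J l)) = (\<Prod>l\<in>{1..<k}. \<Lambda> l (J l))"
    by (intro prod.cong) auto
  finally show ?thesis by (metis mult.commute)
qed

lemma prod_insert_k2:
  assumes "k \<ge> (1::nat)"
  shows "(\<Prod>l\<in>{1..<Suc k}. f l ((\<Lambda>(k := \<mu>)) l)) = (\<Prod>l\<in>{1..<k}. f l (\<Lambda> l)) * f k \<mu>"
proof -
  have "{1..<Suc k} = insert k {1..<k}" using assms by auto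
  then have "(\<Prod>l\<in>{1..<Suc k}. f l ((\<Lambda>(k := \<mu>)) l)) = f k \<mu> * (\<Prod>l\<in>{1..<k}. f l ((\<Lambda>(k := \<mu>)) l))"
    by simp
  also have "(\<Prod>l\<in>{1..<k}. f l ((\<Lambda>(k := \<mu>)) l)) = (\<Prod>l\<in>{1..<k}. f l (\<Lambda> l))"
    by (intro prod.cong) auto
  finally show ?thesis by (metis mult.commute)
qed

lemma powr_eq_imp_eq:
  fixes x y :: real
  assumes "0 \<le> x" "0 \<le> y" "\<sigma> > 0" "x powr \<sigma> = y powr \<sigma>"
  shows "x = y"
proof -
  have e: "\<sigma> * (1/\<sigma>) = 1" using assms by simp
  have "x = x powr (\<sigma> * (1/\<sigma>))" using assms e by simp
  also have "\<dots> = (x powr \<sigma>) powr (1/\<sigma>)" by (simp add: powr_powr)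
  also have "\<dots> = (y powr \<sigma>) powr (1/\<sigma>)" using assms by simp
  also have "\<dots> = y powr (\<sigma> * (1/\<sigma>))" by (simp add: powr_powr)
  also have "\<dots> = y" using assms e by simp
  finally show ?thesis .
qed

lemma claim_step:
  assumes k: "1 \<le> k" "k \<le> m"
    and a0: "\<forall>J. 0 \<le> a J"
    and s1: "\<forall>k\<in>{1..Suc m}. s' k \<ge> 1"
    and t1: "\<forall>k\<in>{1..m}. t k \<ge> 1"
    and rel: "\<forall>k\<in>{1..m}. einv (s' (Suc k)) = einv (s' k) + einv (t k)"
    and fin: "\<forall>k\<in>{2..Suc m}. s' k \<noteq> \<infinity>"
    and B: "B \<ge> 0"
    and C: "claim s' t n m a J0 B (Suc k)"
  shows "claim s' t n m a J0 B k"
proof (unfold claim_def, intro allI impI)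
  fix \<Lambda> :: "nat \<Rightarrow> nat \<Rightarrow> real" assume \<Lambda>: "\<forall>l j. 0 \<le> \<Lambda> l j"
  define u where "u = (\<lambda>l. if l \<le> k then s' k else s' l)"
  define u' where "u' = (\<lambda>l. if l \<le> Suc k then s' (Suc k) else s' l)"
  define W where "W = (\<lambda>J. \<Prod>l\<in>{1..<k}. \<Lambda> l (J l))"
  define N where "N = (\<lambda>K. mixnorm u n m (m - k) a K)"
  define Bk where "Bk = B * (\<Prod>l\<in>{1..<k}. lpnorm (t l) n (\<Lambda> l))"
  have "s' (Suc k) \<ge> 1" "s' (Suc k) \<noteq> \<infinity>" using s1 fin k by auto
  then obtain \<sigma>' where \<sigma>': "s' (Suc k) = ereal \<sigma>'" "\<sigma>' \<ge> 1"
    by (cases rule: ereal_ge1_cases) auto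
  have sk1: "s' k \<ge> 1" using s1 k by auto
  have tk1: "t k \<ge> 1" using t1 k by auto
  have "einv (s' (Suc k)) = einv (s' k) + einv (t k)" using rel k by auto
  then have relk: "1 / \<sigma>' = einv (s' k) + einv (t k)" using \<sigma>' by simp
  have W0: "\<forall>J. 0 \<le> W J" using \<Lambda> by (simp add: W_def prod_nonneg)
  have N0: "\<forall>K. 0 \<le> N K" using a0 by (simp add: N_def mixnorm_nonneg)
  have Bk0: "Bk \<ge> 0" using B by (simp add: Bk_def lpnorm_nonneg prod_nonneg)
  have Wupd: "W (J(l := j)) = W J" if "l \<ge> k" for J l j
    unfolding W_def using that by (intro prod.cong) auto
  have mk: "m - (m - k) = k" using k by simp
  have Nu': "mixnorm u' n m (m - k) a K = N K" for K
    unfolding N_def by (rule mixnorm_cong_r) (auto simp: u_def u'_def mk le_Suc_eq)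
  have F1: "mixnorm u n m (Suc (m - k)) (\<lambda>J. W J * a J) K = lpnorm (s' k) n (\<lambda>j. W K * N (K(k := j)))" for K
  proof -
    have "mixnorm u n m (m - k) (\<lambda>J. W J * a J) (K(k := j)) = W (K(k := j)) * N (K(k := j))" for j
      unfolding N_def
    proof (rule mixnorm_factor)
      show "\<forall>J j l. m - (m - k) < l \<and> l \<le> m \<longrightarrow> W (J(l := j)) = W J" using Wupd mk by auto
      show "\<forall>l. m - (m - k) < l \<and> l \<le> m \<longrightarrow> 1 \<le> u l" using s1 mk by (auto simp: u_def)
    qed (use W0 in auto)
    then show ?thesis using Wupd by (simp add: mk u_def)
  qed
  have F2: "mixnorm u' n m (Suc (m - k)) (\<lambda>J. (W J * \<mu> (J k)) * a J) K
      = lpnorm (ereal \<sigma>') n (\<lambda>j. \<mu> j * (W K * N (K(k := j))))" if \<mu>: "\<forall>j. 0 \<le> \<mu> j" for K \<mu>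
  proof -
    have "mixnorm u' n m (m - k) (\<lambda>J. (W J * \<mu> (J k)) * a J) (K(k := j))
        = (W (K(k := j)) * \<mu> ((K(k := j)) k)) * mixnorm u' n m (m - k) a (K(k := j))" for j
    proof (rule mixnorm_factor)
      show "\<forall>J j l. m - (m - k) < l \<and> l \<le> m \<longrightarrow> W (J(l := j)) * \<mu> ((J(l := j)) k) = W J * \<mu> (J k)"
        using Wupd mk by auto
      show "\<forall>l. m - (m - k) < l \<and> l \<le> m \<longrightarrow> 1 \<le> u' l" using s1 mk by (auto simp: u'_def)
    qed (use W0 \<mu> in auto)
    moreover have "u' k = ereal \<sigma>'" using \<sigma>' by (simp add: u'_def)
    ultimately show ?thesis using Wupd by (simp add: mk Nu' mult_ac)
  qed
  have hyp: "mixnorm u' n m m (\<lambda>J. (W J * \<mu> (J k)) * a J) J0 \<le> Bk * lpnorm (t k) n \<mu>"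
    if \<mu>: "\<forall>j. 0 \<le> \<mu> j" for \<mu>
  proof -
    have "\<forall>l j. 0 \<le> (\<Lambda>(k := \<mu>)) l j" using \<Lambda> \<mu> by auto
    then have "mixnorm u' n m m (\<lambda>J. (\<Prod>l\<in>{1..<Suc k}. (\<Lambda>(k := \<mu>)) l (J l)) * a J) J0
       \<le> B * (\<Prod>l\<in>{1..<Suc k}. lpnorm (t l) n ((\<Lambda>(k := \<mu>)) l))"
      using C unfolding claim_def u'_def by blast
    then show ?thesis
      using prod_insert_k[OF k(1), of \<Lambda> \<mu>] prod_insert_k2[OF k(1), of "\<lambda>l x. lpnorm (t l) n x" \<Lambda> \<mu>]
      by (simp add: W_def Bk_def mult_ac)
  qed
  have main: "mixnorm u n m m (\<lambda>J. W J * a J) J0 \<le> Bk"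
  proof (cases "k = 1")
    case True
    have meq: "Suc (m - k) = m" using k True by simp
    define G where "G = (\<lambda>j. W J0 * N (J0(k := j)))"
    have G0: "\<forall>j\<in>{1..n}. 0 \<le> G j" using W0 N0 by (simp add: G_def)
    have "lpnorm (s' k) n G \<le> Bk"
    proof (rule lpnorm_dual[OF \<sigma>'(2) sk1 tk1 relk G0 Bk0])
      fix \<mu> :: "nat \<Rightarrow> real" assume \<mu>: "\<forall>j. 0 \<le> \<mu> j"
      have "lpnorm (ereal \<sigma>') n (\<lambda>j. \<mu> j * G j) = mixnorm u' n m (Suc (m - k)) (\<lambda>J. (W J * \<mu> (J k)) * a J) J0"
        using F2[OF \<mu>] by (simp add: G_def)
      also have "\<dots> = mixnorm u' n m m (\<lambda>J. (W J * \<mu> (J k)) * a J) J0" by (simp only: meq)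
      also have "\<dots> \<le> Bk * lpnorm (t k) n \<mu>" by (rule hyp[OF \<mu>])
      finally show "lpnorm (ereal \<sigma>') n (\<lambda>j. \<mu> j * G j) \<le> Bk * lpnorm (t k) n \<mu>" .
    qed
    moreover have "mixnorm u n m m (\<lambda>J. W J * a J) J0 = lpnorm (s' k) n G"
    proof -
      have "mixnorm u n m m (\<lambda>J. W J * a J) J0 = mixnorm u n m (Suc (m - k)) (\<lambda>J. W J * a J) J0"
        by (simp only: meq)
      then show ?thesis using F1 by (simp add: G_def)
    qed
    ultimately show ?thesis by simp
  next
    case False
    then have k2: "k \<ge> 2" using k by simp
    have skf: "s' k \<noteq> \<infinity>" using fin k2 k by auto
    obtain \<sigma> where \<sigma>: "s' k = ereal \<sigma>" "\<sigma> \<ge> 1" using sk1 skf by (cases rule: ereal_ge1_cases) auto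
    have "1 / \<sigma>' \<ge> 1 / \<sigma>" using relk \<sigma> einv_nonneg[OF tk1] by simp
    moreover have "\<sigma> > 0" "\<sigma>' > 0" using \<sigma> \<sigma>' by auto
    ultimately have \<sigma>\<sigma>: "\<sigma>' \<le> \<sigma>" by (simp add: field_simps)
    have mc: "m - (k - 1) = Suc (m - k)" using k k2 by simp
    define P where "P = PiE {1..k - 1} (\<lambda>_. {1..n::nat})"
    have Pfin: "finite P" by (simp add: P_def finite_PiE)
    define V where "V = (\<lambda>j J'. W (updJ J0 (k - 1) J') * N ((updJ J0 (k - 1) J')(k := j)))"
    have V0: "0 \<le> V j J'" for j J' using W0 N0 by (simp add: V_def)
    define G where "G = (\<lambda>j. (\<Sum>J'\<in>P. V j J' powr \<sigma>') powr (1/\<sigma>'))"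
    define H where "H = (\<lambda>j. (\<Sum>J'\<in>P. V j J' powr \<sigma>) powr (1/\<sigma>))"
    have G0: "0 \<le> G j" for j by (simp add: G_def)
    have H0: "0 \<le> H j" for j by (simp add: H_def)
    have WA0: "\<forall>J. 0 \<le> W J * a J" using W0 a0 by simp
    have Rep1: "mixnorm u n m m (\<lambda>J. W J * a J) J0 powr \<sigma> = (\<Sum>J'\<in>P. \<Sum>j=1..n. V j J' powr \<sigma>)"
    proof -
      have "mixnorm u n m m (\<lambda>J. W J * a J) J0 powr \<sigma>
          = (\<Sum>J'\<in>P. mixnorm u n m (m - (k - 1)) (\<lambda>J. W J * a J) (updJ J0 (k - 1) J') powr \<sigma>)"
        unfolding P_def using k \<sigma> WA0 by (intro mixnorm_uniform) (auto simp: u_def)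
      also have "\<dots> = (\<Sum>J'\<in>P. \<Sum>j=1..n. V j J' powr \<sigma>)"
      proof (intro sum.cong refl)
        fix J' assume "J' \<in> P"
        have "mixnorm u n m (m - (k - 1)) (\<lambda>J. W J * a J) (updJ J0 (k - 1) J')
            = lpnorm (ereal \<sigma>) n (\<lambda>j. V j J')"
          unfolding mc F1 V_def \<sigma> ..
        then show "mixnorm u n m (m - (k - 1)) (\<lambda>J. W J * a J) (updJ J0 (k - 1) J') powr \<sigma> = (\<Sum>j=1..n. V j J' powr \<sigma>)"
          using \<sigma> V0 by (simp add: lpnorm_powr)
      qed
      finally show ?thesis .
    qed
    have "lpnorm (s' k) n G \<le> Bk"
    proof (rule lpnorm_dual[OF \<sigma>'(2) sk1 tk1 relk _ Bk0])
      show "\<forall>j\<in>{1..n}. 0 \<le> G j" using G0 by simp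
      fix \<mu> :: "nat \<Rightarrow> real" assume \<mu>: "\<forall>j. 0 \<le> \<mu> j"
      have WA0': "\<forall>J. 0 \<le> (W J * \<mu> (J k)) * a J" using W0 a0 \<mu> by simp
      have "mixnorm u' n m m (\<lambda>J. (W J * \<mu> (J k)) * a J) J0 powr \<sigma>'
          = (\<Sum>J'\<in>P. mixnorm u' n m (m - (k - 1)) (\<lambda>J. (W J * \<mu> (J k)) * a J) (updJ J0 (k - 1) J') powr \<sigma>')"
        unfolding P_def using k \<sigma>' WA0' by (intro mixnorm_uniform) (auto simp: u'_def)
      also have "\<dots> = (\<Sum>J'\<in>P. \<Sum>j=1..n. (\<mu> j * V j J') powr \<sigma>')"
      proof (intro sum.cong refl)
        fix J' assume "J' \<in> P"
        have "mixnorm u' n m (m - (k - 1)) (\<lambda>J. (W J * \<mu> (J k)) * a J) (updJ J0 (k - 1) J')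
            = lpnorm (ereal \<sigma>') n (\<lambda>j. \<mu> j * V j J')"
          unfolding mc F2[OF \<mu>] V_def ..
        then show "mixnorm u' n m (m - (k - 1)) (\<lambda>J. (W J * \<mu> (J k)) * a J) (updJ J0 (k - 1) J') powr \<sigma>'
            = (\<Sum>j=1..n. (\<mu> j * V j J') powr \<sigma>')"
          using \<sigma>' V0 \<mu> by (simp add: lpnorm_powr)
      qed
      also have "\<dots> = (\<Sum>j=1..n. \<Sum>J'\<in>P. (\<mu> j * V j J') powr \<sigma>')"
        by (rule sum.swap)
      also have "\<dots> = (\<Sum>j=1..n. (\<mu> j * G j) powr \<sigma>')"
      proof (intro sum.cong refl)
        fix j
        have "(\<mu> j * G j) powr \<sigma>' = \<mu> j powr \<sigma>' * G j powr \<sigma>'" using \<mu> G0 by (simp add: powr_mult)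
        also have "G j powr \<sigma>' = (\<Sum>J'\<in>P. V j J' powr \<sigma>')"
          unfolding G_def using \<sigma>' V0 by (simp add: powr_powr sum_nonneg)
        finally show "(\<Sum>J'\<in>P. (\<mu> j * V j J') powr \<sigma>') = (\<mu> j * G j) powr \<sigma>'"
          using \<mu> V0 by (simp add: powr_mult sum_distrib_left)
      qed
      also have "\<dots> = lpnorm (ereal \<sigma>') n (\<lambda>j. \<mu> j * G j) powr \<sigma>'"
        using \<sigma>' \<mu> G0 by (simp add: lpnorm_powr)
      finally have eq: "mixnorm u' n m m (\<lambda>J. (W J * \<mu> (J k)) * a J) J0 powr \<sigma>' = lpnorm (ereal \<sigma>') n (\<lambda>j. \<mu> j * G j) powr \<sigma>'" .
      have "\<sigma>' > 0" using \<sigma>' by simp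
      have "mixnorm u' n m m (\<lambda>J. (W J * \<mu> (J k)) * a J) J0 = lpnorm (ereal \<sigma>') n (\<lambda>j. \<mu> j * G j)"
        by (rule powr_eq_imp_eq[OF mixnorm_nonneg[OF WA0'] lpnorm_nonneg \<open>\<sigma>' > 0\<close> eq])
      then show "lpnorm (ereal \<sigma>') n (\<lambda>j. \<mu> j * G j) \<le> Bk * lpnorm (t k) n \<mu>"
        using hyp[OF \<mu>] by (simp only:)
    qed
    moreover have "mixnorm u n m m (\<lambda>J. W J * a J) J0 = lpnorm (ereal \<sigma>) n H"
    proof (rule powr_eq_imp_eq[of _ _ \<sigma>])
      show "0 \<le> mixnorm u n m m (\<lambda>J. W J * a J) J0" using WA0 by (simp add: mixnorm_nonneg)
      show "0 \<le> lpnorm (ereal \<sigma>) n H" by (simp add: lpnorm_nonneg)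
      show "\<sigma> > 0" using \<sigma> by simp
      have "mixnorm u n m m (\<lambda>J. W J * a J) J0 powr \<sigma> = (\<Sum>j=1..n. \<Sum>J'\<in>P. V j J' powr \<sigma>)"
        unfolding Rep1 by (rule sum.swap)
      also have "\<dots> = (\<Sum>j=1..n. H j powr \<sigma>)"
        unfolding H_def using \<sigma> V0 by (intro sum.cong refl) (simp add: powr_powr sum_nonneg)
      also have "\<dots> = lpnorm (ereal \<sigma>) n H powr \<sigma>"
        using \<sigma> H0 by (simp add: lpnorm_powr)
      finally show "mixnorm u n m m (\<lambda>J. W J * a J) J0 powr \<sigma> = lpnorm (ereal \<sigma>) n H powr \<sigma>" .
    qed
    moreover have "lpnorm (ereal \<sigma>) n H \<le> lpnorm (ereal \<sigma>) n G"
    proof (rule lpnorm_mono)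
      show "1 \<le> ereal \<sigma>" using \<sigma> by simp
      show "\<forall>j\<in>{1..n}. \<bar>H j\<bar> \<le> \<bar>G j\<bar>"
        using H0 G0 sum_powr_mono_exp[OF Pfin, of \<sigma>' \<sigma>] \<sigma>' \<sigma>\<sigma> V0 by (simp add: H_def G_def)
    qed
    ultimately show ?thesis using \<sigma> by simp
  qed
  then show "mixnorm (\<lambda>l. if l \<le> k then s' k else s' l) n m m (\<lambda>J. (\<Prod>l\<in>{1..<k}. \<Lambda> l (J l)) * a J) J0
      \<le> B * (\<Prod>l\<in>{1..<k}. lpnorm (t l) n (\<Lambda> l))"
    by (simp add: u_def W_def Bk_def)
qed



lemma core:
  assumes m: "m \<ge> 1"
    and a0: "\<forall>J. 0 \<le> a J"
    and s1: "\<forall>k\<in>{1..Suc m}. s' k \<ge> 1"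
    and t1: "\<forall>k\<in>{1..m}. t k \<ge> 1"
    and rel: "\<forall>k\<in>{1..m}. einv (s' (Suc k)) = einv (s' k) + einv (t k)"
    and fin: "\<forall>k\<in>{2..Suc m}. s' k \<noteq> \<infinity>"
    and B: "B \<ge> 0"
    and H: "\<forall>\<Lambda>. (\<forall>l j. 0 \<le> \<Lambda> l j) \<longrightarrow>
       mixnorm (\<lambda>_. s' (Suc m)) n m m (\<lambda>J. (\<Prod>l\<in>{1..m}. \<Lambda> l (J l)) * a J) J0
         \<le> B * (\<Prod>l\<in>{1..m}. lpnorm (t l) n (\<Lambda> l))"
  shows "mixnorm s' n m m a J0 \<le> B"
proof -
  have cm: "claim s' t n m a J0 B (Suc m)"
    unfolding claim_def
  proof (intro allI impI)
    fix \<Lambda> :: "nat \<Rightarrow> nat \<Rightarrow> real" assume \<Lambda>: "\<forall>l j. 0 \<le> \<Lambda> l j"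
    have e: "{1..<Suc m} = {1..m}" by auto
    have "mixnorm (\<lambda>l. if l \<le> Suc m then s' (Suc m) else s' l) n m m (\<lambda>J. (\<Prod>l\<in>{1..m}. \<Lambda> l (J l)) * a J) J0
        = mixnorm (\<lambda>_. s' (Suc m)) n m m (\<lambda>J. (\<Prod>l\<in>{1..m}. \<Lambda> l (J l)) * a J) J0"
      by (rule mixnorm_cong_r) auto
    then show "mixnorm (\<lambda>l. if l \<le> Suc m then s' (Suc m) else s' l) n m m (\<lambda>J. (\<Prod>l\<in>{1..<Suc m}. \<Lambda> l (J l)) * a J) J0
       \<le> B * (\<Prod>l\<in>{1..<Suc m}. lpnorm (t l) n (\<Lambda> l))"
      using H \<Lambda> unfolding e by simp
  qed
  have all: "i \<le> m \<Longrightarrow> claim s' t n m a J0 B (Suc m - i)" for i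
  proof (induction i)
    case 0 then show ?case using cm by simp
  next
    case (Suc i)
    have i: "i \<le> m" using Suc.prems by simp
    have "claim s' t n m a J0 B (Suc m - i)" by (rule Suc.IH[OF i])
    moreover have "Suc m - i = Suc (m - i)" using i by simp
    ultimately have "claim s' t n m a J0 B (Suc (m - i))" by simp
    moreover have k1: "1 \<le> m - i" using Suc.prems by simp
    moreover have k2: "m - i \<le> m" by simp
    ultimately have "claim s' t n m a J0 B (m - i)"
      using claim_step[OF k1 k2 a0 s1 t1 rel fin B] by blast
    then show ?case by simp
  qed
  have c1: "claim s' t n m a J0 B 1" using all[of m] by simp
  have "mixnorm (\<lambda>l. if l \<le> 1 then s' 1 else s' l) n m m a J0 \<le> B"
    using c1[unfolded claim_def, rule_format, of "\<lambda>_ _. 1"] by simp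
  moreover have "mixnorm (\<lambda>l. if l \<le> 1 then s' 1 else s' l) n m m a J0 = mixnorm s' n m m a J0"
    by (rule mixnorm_cong_r) (auto simp: le_Suc_eq)
  ultimately show ?thesis by simp
qed



lemma scalar_field_real: "is_scalar_field K \<Longrightarrow> complex_of_real a \<in> K"
  by (auto simp: is_scalar_field_def)

lemma zero_dual_ball: "is_scalar_field K \<Longrightarrow> (\<lambda>_. 0) \<in> dual_ball K sm V"
  using scalar_field_real[of K 0] by (simp add: dual_ball_def)

lemma dual_ball_lp_bound:
  assumes "\<phi> \<in> dual_ball K sm V" "\<forall>j\<in>{1..n}. x j \<in> V" "p \<ge> 1"
  shows "lpnorm p n (\<lambda>j. cmod (\<phi> (x j))) \<le> lpnorm p n (\<lambda>j. norm (x j))"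
  using assms by (intro lpnorm_mono) (auto simp: dual_ball_def)

lemma wnorm_ge:
  assumes "\<phi> \<in> dual_ball K sm V" "\<forall>j\<in>{1..n}. x j \<in> V" "p \<ge> 1"
  shows "lpnorm p n (\<lambda>j. cmod (\<phi> (x j))) \<le> wnorm K sm V p n x"
  unfolding wnorm_def
proof (rule cSup_upper)
  show "lpnorm p n (\<lambda>j. cmod (\<phi> (x j))) \<in> (\<lambda>\<phi>. lpnorm p n (\<lambda>j. cmod (\<phi> (x j)))) ` dual_ball K sm V"
    using assms(1) by blast
  show "bdd_above ((\<lambda>\<phi>. lpnorm p n (\<lambda>j. cmod (\<phi> (x j)))) ` dual_ball K sm V)"
    using dual_ball_lp_bound[OF _ assms(2,3)] by (intro bdd_aboveI2) blast
qed

lemma wnorm_nonneg: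
  assumes "is_scalar_field K" "\<forall>j\<in>{1..n}. x j \<in> V" "p \<ge> 1"
  shows "0 \<le> wnorm K sm V p n x"
  using wnorm_ge[OF zero_dual_ball[OF assms(1)] assms(2,3)] lpnorm_nonneg order_trans by blast

lemma wnorm_scale:
  assumes K: "is_scalar_field K"
    and x: "\<forall>j\<in>{1..n}. x j \<in> V"
    and lam: "\<forall>j. 0 \<le> lam j"
    and p: "p \<ge> 1" and t: "t \<ge> 1" and q: "q \<ge> 1"
    and e: "einv p = einv t + einv q"
  shows "wnorm K sm V p n (\<lambda>j. sm (complex_of_real (lam j)) (x j)) \<le> lpnorm t n lam * wnorm K sm V q n x"
  unfolding wnorm_def[of K sm V p]
proof (rule cSup_least)
  show "(\<lambda>\<phi>. lpnorm p n (\<lambda>j. cmod (\<phi> (sm (complex_of_real (lam j)) (x j))))) ` dual_ball K sm V \<noteq> {}"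
    using zero_dual_ball[OF K] by blast
  fix y assume "y \<in> (\<lambda>\<phi>. lpnorm p n (\<lambda>j. cmod (\<phi> (sm (complex_of_real (lam j)) (x j))))) ` dual_ball K sm V"
  then obtain \<phi> where \<phi>: "\<phi> \<in> dual_ball K sm V"
    and y: "y = lpnorm p n (\<lambda>j. cmod (\<phi> (sm (complex_of_real (lam j)) (x j))))" by blast
  have "y = lpnorm p n (\<lambda>j. lam j * cmod (\<phi> (x j)))"
    unfolding y
  proof (rule lpnorm_cong, rule ballI)
    fix j assume j: "j \<in> {1..n}"
    have "\<phi> (sm (complex_of_real (lam j)) (x j)) = complex_of_real (lam j) * \<phi> (x j)"
      using \<phi> x j scalar_field_real[OF K] by (auto simp: dual_ball_def)
    then show "\<bar>cmod (\<phi> (sm (complex_of_real (lam j)) (x j)))\<bar> = \<bar>lam j * cmod (\<phi> (x j))\<bar>"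
      using lam by (simp add: norm_mult)
  qed
  also have "\<dots> \<le> lpnorm t n lam * lpnorm q n (\<lambda>j. cmod (\<phi> (x j)))"
    by (rule lpnorm_holder[OF p t q e])
  also have "\<dots> \<le> lpnorm t n lam * wnorm K sm V q n x"
    by (intro mult_left_mono wnorm_ge[OF \<phi> x q] lpnorm_nonneg)
  finally show "y \<le> lpnorm t n lam * wnorm K sm V q n x" .
qed

lemma multilinear_scale:
  assumes Mlin: "multilinear_on K smX smY m V T"
    and KY: "K_space K smY"
    and z: "z \<in> PiE {1..m} V"
    and c: "\<forall>k\<in>{1..m}. c k \<in> K"
    and cl: "\<forall>k\<in>{1..m}. smX (c k) (z k) \<in> V k"
  shows "norm (T (\<lambda>k\<in>{1..m}. smX (c k) (z k))) = (\<Prod>k\<in>{1..m}. cmod (c k)) * norm (T z)"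
proof -
  define w where "w = (\<lambda>S. \<lambda>k\<in>{1..m}. if k \<in> S then smX (c k) (z k) else z k)"
  have "finite S \<Longrightarrow> S \<subseteq> {1..m} \<Longrightarrow> w S \<in> PiE {1..m} V \<and> norm (T (w S)) = (\<Prod>k\<in>S. cmod (c k)) * norm (T z)" for S
  proof (induction S rule: finite_induct)
    case empty
    have "w {} = z" using z unfolding w_def by (auto simp: PiE_def extensional_def)
    then show ?case using z by simp
  next
    case (insert a S)
    have wS: "w S \<in> PiE {1..m} V" using insert.IH insert.prems by blast
    have aS: "a \<in> {1..m}" using insert.prems by blast
    have wa: "w (insert a S) = (w S)(a := smX (c a) (w S a))"
      using insert.hyps aS unfolding w_def by (auto simp: fun_eq_iff)
    have "w (insert a S) \<in> PiE {1..m} V"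
      using z cl unfolding w_def by (auto simp: PiE_def Pi_def)
    moreover have "T (w (insert a S)) = smY (c a) (T (w S))"
      unfolding wa using Mlin wS aS c by (auto simp: multilinear_on_def)
    then have "norm (T (w (insert a S))) = cmod (c a) * norm (T (w S))"
      using KY c aS by (auto simp: K_space_def)
    ultimately show ?case using insert.IH insert.prems insert.hyps by simp
  qed
  moreover have "w {1..m} = (\<lambda>k\<in>{1..m}. smX (c k) (z k))"
    unfolding w_def by (intro restrict_ext) auto
  ultimately show ?thesis by (metis finite_atLeastAtMost order_refl)
qed



lemma invsum_split: "k \<le> m \<Longrightarrow> invsum_from f m k = einv (f k) + invsum_from f m (Suc k)"
  by (simp add: invsum_from_def sum.atLeast_Suc_atMost)

lemma invsum_end: "invsum_from f m (Suc m) = 0"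
  by (simp add: invsum_from_def)

lemma einv_strict: assumes "p \<ge> 1" "q > p" shows "einv q < einv p"
proof -
  have "q \<ge> 1" using assms by (metis order.strict_implies_order order.trans)
  show ?thesis
    apply (rule ereal_ge1_cases[OF assms(1)]; rule ereal_ge1_cases[OF \<open>q \<ge> 1\<close>])
    using assms by (auto simp: frac_less2)
qed

theorem theorem3:
  fixes K :: "complex set"
    and smX :: "complex \<Rightarrow> 'a::banach \<Rightarrow> 'a"
    and smY :: "complex \<Rightarrow> 'b::banach \<Rightarrow> 'b"
    and V :: "nat \<Rightarrow> 'a set"
    and m :: nat and r :: real
    and p q s :: "nat \<Rightarrow> ereal"
    and T :: "(nat \<Rightarrow> 'a) \<Rightarrow> 'b"
  assumes K: "is_scalar_field K"
    and KX: "K_space K smX" and KY: "K_space K smY"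
    and V: "\<forall>k\<in>{1..m}. K_banach_subspace K smX (V k)"
    and m: "m \<ge> 1" and r: "r \<ge> 1"
    and p: "\<forall>k\<in>{1..m}. p k \<ge> 1" and q: "\<forall>k\<in>{1..m}. q k \<ge> 1"
    and cases:
      "((\<forall>k\<in>{1..m}. q k \<ge> p k) \<and> 1 / r - invsum_from p m 1 + invsum_from q m 1 > 0) \<or>
       ((\<forall>k\<in>{2..m}. q k \<ge> p k) \<and> q 1 > p 1 \<and> 1 / r - invsum_from p m 1 + invsum_from q m 1 \<ge> 0)"
    and s_def: "\<forall>k\<in>{1..m}. einv (s k) - invsum_from q m k = 1 / r - invsum_from p m k"
    and s: "\<forall>k\<in>{1..m}. s k \<ge> 1"
    and T: "multiple_summing K smX smY m V (\<lambda>_. ereal r) p T"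
  shows "multiple_summing K smX smY m V s q T \<and>
         pi_norm K smX m V s q T \<le> pi_norm K smX m V (\<lambda>_. ereal r) p T"
proof -
  have sd: "einv (s k) = 1 / r - invsum_from p m k + invsum_from q m k" if "k \<in> {1..m}" for k
  proof -
    have "einv (s k) - invsum_from q m k = 1 / r - invsum_from p m k" using s_def that by blast
    then show ?thesis by linarith
  qed
  define s' where "s' = (\<lambda>k. if k = Suc m then ereal r else s k)"
  define t where "t = (\<lambda>k. if einv (p k) - einv (q k) = 0 then \<infinity>
                           else ereal (1 / (einv (p k) - einv (q k))))"
  have qp: "\<forall>k\<in>{1..m}. q k \<ge> p k"
  proof
    fix k assume k: "k \<in> {1..m}"
    show "q k \<ge> p k"
    proof (cases "k = 1")
      case True then show ?thesis using cases m by auto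
    next
      case False then show ?thesis using cases k by auto
    qed
  qed
  have einvt: "einv (t k) = einv (p k) - einv (q k)" for k
    by (simp add: t_def)
  have t1: "\<forall>k\<in>{1..m}. t k \<ge> 1"
  proof
    fix k assume k: "k \<in> {1..m}"
    have d0: "einv (p k) - einv (q k) \<ge> 0" using einv_mono p qp k by fastforce
    have d1: "einv (p k) - einv (q k) \<le> 1" using einv_le1 einv_nonneg p q k by fastforce
    show "t k \<ge> 1"
    proof (cases "einv (p k) - einv (q k) = 0")
      case True then show ?thesis by (simp add: t_def)
    next
      case False
      then have "einv (p k) - einv (q k) > 0" using d0 by simp
      then have "1 / (einv (p k) - einv (q k)) \<ge> 1" using d1 by simp
      then show ?thesis using False by (simp add: t_def)
    qed
  qed
  have s1: "\<forall>k\<in>{1..Suc m}. s' k \<ge> 1"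
    using s r by (auto simp: s'_def)
  have rel: "\<forall>k\<in>{1..m}. einv (s' (Suc k)) = einv (s' k) + einv (t k)"
  proof
    fix k assume k: "k \<in> {1..m}"
    have sk: "einv (s k) = 1 / r - invsum_from p m k + invsum_from q m k" using sd k by blast
    have ps: "invsum_from p m k = einv (p k) + invsum_from p m (Suc k)"
      "invsum_from q m k = einv (q k) + invsum_from q m (Suc k)"
      using k by (auto intro: invsum_split)
    show "einv (s' (Suc k)) = einv (s' k) + einv (t k)"
    proof (cases "k = m")
      case True
      then show ?thesis using sk ps by (simp add: s'_def einvt invsum_end)
    next
      case False
      then have "Suc k \<in> {1..m}" using k by auto
      then have "einv (s (Suc k)) = 1 / r - invsum_from p m (Suc k) + invsum_from q m (Suc k)"
        by (rule sd)
      then show ?thesis using sk ps k False by (simp add: s'_def einvt)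
    qed
  qed
  have fin: "\<forall>k\<in>{2..Suc m}. s' k \<noteq> \<infinity>"
  proof -
    have "1 \<in> {1..m}" using m by simp
    then have e2: "einv (s' 2) = einv (s' 1) + einv (t 1)" using rel by (simp add: numeral_2_eq_2)
    have e1: "einv (s' 1) = 1 / r - invsum_from p m 1 + invsum_from q m 1"
      using sd[of 1] m by (auto simp: s'_def)
    have t0: "einv (t 1) \<ge> 0" using t1 m einv_nonneg by auto
    have pos2: "einv (s' 2) > 0"
      using cases
    proof
      assume "(\<forall>k\<in>{1..m}. q k \<ge> p k) \<and> 1 / r - invsum_from p m 1 + invsum_from q m 1 > 0"
      then show ?thesis using e1 e2 t0 by simp
    next
      assume A: "(\<forall>k\<in>{2..m}. q k \<ge> p k) \<and> q 1 > p 1 \<and> 1 / r - invsum_from p m 1 + invsum_from q m 1 \<ge> 0"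
      have "einv (q 1) < einv (p 1)" using einv_strict p m A by auto
      then have "einv (t 1) > 0" by (simp add: einvt)
      then show ?thesis using e1 e2 A by simp
    qed
    have mono: "2 \<le> k \<Longrightarrow> k \<le> Suc m \<Longrightarrow> einv (s' k) \<ge> einv (s' 2)" for k
    proof (induction k)
      case 0 then show ?case by simp
    next
      case (Suc k)
      show ?case
      proof (cases "Suc k = 2")
        case True then show ?thesis by (simp add: numeral_2_eq_2)
      next
        case False
        then have k: "2 \<le> k" "k \<le> m" using Suc.prems by auto
        then have "einv (s' (Suc k)) = einv (s' k) + einv (t k)" using rel by auto
        moreover have "einv (t k) \<ge> 0" using t1 k einv_nonneg by auto
        ultimately show ?thesis using Suc.IH k by simp
      qed
    qed
    show ?thesis
    proof
      fix k assume k: "k \<in> {2..Suc m}"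
      then have "einv (s' k) > 0" using mono pos2 by force
      then show "s' k \<noteq> \<infinity>" by auto
    qed
  qed
  have Mlin: "multilinear_on K smX smY m V T"
    using T by (simp add: multiple_summing_def cont_multilinear_def)
  have sub: "summing_consts K smX m V (\<lambda>_. ereal r) p T \<subseteq> summing_consts K smX m V s q T"
  proof
    fix C assume "C \<in> summing_consts K smX m V (\<lambda>_. ereal r) p T"
    then have Cpos: "C > 0" and Chyp: "\<And>n x. (\<forall>k\<in>{1..m}. \<forall>j\<in>{1..n}. x k j \<in> V k) \<Longrightarrow>
        mixnorm (\<lambda>_. ereal r) n m m (\<lambda>J. norm (T (\<lambda>k\<in>{1..m}. x k (J k)))) (\<lambda>_. 0)
          \<le> C * (\<Prod>k=1..m. wnorm K smX (V k) (p k) n (x k))"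
      unfolding summing_consts_def by blast+
    have "\<forall>n x. (\<forall>k\<in>{1..m}. \<forall>j\<in>{1..n}. x k j \<in> V k) \<longrightarrow>
        mixnorm s n m m (\<lambda>J. norm (T (\<lambda>k\<in>{1..m}. x k (J k)))) (\<lambda>_. 0)
          \<le> C * (\<Prod>k=1..m. wnorm K smX (V k) (q k) n (x k))"
    proof (intro allI impI)
      fix n and x :: "nat \<Rightarrow> nat \<Rightarrow> 'a" assume xV: "\<forall>k\<in>{1..m}. \<forall>j\<in>{1..n}. x k j \<in> V k"
      define a where "a = (\<lambda>J. norm (T (\<lambda>k\<in>{1..m}. x k (J k))))"
      define B where "B = C * (\<Prod>k=1..m. wnorm K smX (V k) (q k) n (x k))"
      have B0: "B \<ge> 0" unfolding B_def using Cpos xV q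
        by (intro mult_nonneg_nonneg prod_nonneg) (auto intro!: wnorm_nonneg[OF K])
      have a0: "\<forall>J. 0 \<le> a J" by (simp add: a_def)
      have H: "\<forall>\<Lambda>. (\<forall>l j. 0 \<le> \<Lambda> l j) \<longrightarrow>
         mixnorm (\<lambda>_. s' (Suc m)) n m m (\<lambda>J. (\<Prod>l\<in>{1..m}. \<Lambda> l (J l)) * a J) (\<lambda>_. 0)
           \<le> B * (\<Prod>l\<in>{1..m}. lpnorm (t l) n (\<Lambda> l))"
      proof (intro allI impI)
        fix \<Lambda> :: "nat \<Rightarrow> nat \<Rightarrow> real" assume \<Lambda>: "\<forall>l j. 0 \<le> \<Lambda> l j"
        define y where "y = (\<lambda>k j. smX (complex_of_real (\<Lambda> k j)) (x k j))"
        have yV: "\<forall>k\<in>{1..m}. \<forall>j\<in>{1..n}. y k j \<in> V k"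
          using xV V scalar_field_real[OF K] by (auto simp: y_def K_banach_subspace_def)
        have eqF: "mixnorm (\<lambda>_. s' (Suc m)) n m m (\<lambda>J. (\<Prod>l\<in>{1..m}. \<Lambda> l (J l)) * a J) (\<lambda>_. 0)
            = mixnorm (\<lambda>_. ereal r) n m m (\<lambda>J. norm (T (\<lambda>k\<in>{1..m}. y k (J k)))) (\<lambda>_. 0)"
        proof -
          have "s' (Suc m) = ereal r" by (simp add: s'_def)
          moreover have "mixnorm (\<lambda>_. ereal r) n m m (\<lambda>J. (\<Prod>l\<in>{1..m}. \<Lambda> l (J l)) * a J) (\<lambda>_. 0)
            = mixnorm (\<lambda>_. ereal r) n m m (\<lambda>J. norm (T (\<lambda>k\<in>{1..m}. y k (J k)))) (\<lambda>_. 0)"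
          proof (rule mixnorm_cong_F[OF order_refl], intro allI impI)
            fix J' assume "(\<forall>l. m - m < l \<and> l \<le> m \<longrightarrow> J' l \<in> {1..n}) \<and>
              (\<forall>l. \<not> (m - m < l \<and> l \<le> m) \<longrightarrow> J' l = 0)"
            then have J': "\<forall>l\<in>{1..m}. J' l \<in> {1..n}" by auto
            define z where "z = (\<lambda>k\<in>{1..m}. x k (J' k))"
            have z: "z \<in> PiE {1..m} V" using J' xV by (auto simp: z_def)
            have "norm (T (\<lambda>k\<in>{1..m}. smX (complex_of_real (\<Lambda> k (J' k))) (z k)))
                = (\<Prod>k\<in>{1..m}. cmod (complex_of_real (\<Lambda> k (J' k)))) * norm (T z)"
              by (rule multilinear_scale[OF Mlin KY z])
                (use scalar_field_real[OF K] yV J' in \<open>auto simp: z_def y_def\<close>)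
            moreover have "(\<lambda>k\<in>{1..m}. smX (complex_of_real (\<Lambda> k (J' k))) (z k)) = (\<lambda>k\<in>{1..m}. y k (J' k))"
              by (intro restrict_ext) (simp add: z_def y_def)
            moreover have "(\<Prod>k\<in>{1..m}. cmod (complex_of_real (\<Lambda> k (J' k)))) = (\<Prod>k\<in>{1..m}. \<Lambda> k (J' k))"
              using \<Lambda> by (intro prod.cong) auto
            ultimately show "(\<Prod>l\<in>{1..m}. \<Lambda> l (J' l)) * a J' = norm (T (\<lambda>k\<in>{1..m}. y k (J' k)))"
              by (simp add: a_def z_def)
          qed
          ultimately show ?thesis by simp
        qed
        have "(\<Prod>k=1..m. wnorm K smX (V k) (p k) n (y k))
            \<le> (\<Prod>k=1..m. lpnorm (t k) n (\<Lambda> k) * wnorm K smX (V k) (q k) n (x k))"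
        proof (rule prod_mono, rule conjI)
          fix k assume k: "k \<in> {1..m}"
          show "0 \<le> wnorm K smX (V k) (p k) n (y k)"
            using yV p k by (intro wnorm_nonneg[OF K]) auto
          show "wnorm K smX (V k) (p k) n (y k) \<le> lpnorm (t k) n (\<Lambda> k) * wnorm K smX (V k) (q k) n (x k)"
            unfolding y_def
            by (rule wnorm_scale[OF K]) (use xV \<Lambda> p q t1 k einvt in auto)
        qed
        also have "\<dots> = (\<Prod>k=1..m. lpnorm (t k) n (\<Lambda> k)) * (\<Prod>k=1..m. wnorm K smX (V k) (q k) n (x k))"
          by (rule prod.distrib)
        finally have "C * (\<Prod>k=1..m. wnorm K smX (V k) (p k) n (y k)) \<le> B * (\<Prod>l\<in>{1..m}. lpnorm (t l) n (\<Lambda> l))"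
          using Cpos by (simp add: B_def mult_ac)
        then show "mixnorm (\<lambda>_. s' (Suc m)) n m m (\<lambda>J. (\<Prod>l\<in>{1..m}. \<Lambda> l (J l)) * a J) (\<lambda>_. 0)
           \<le> B * (\<Prod>l\<in>{1..m}. lpnorm (t l) n (\<Lambda> l))"
          using Chyp[OF yV] eqF by simp
      qed
      have "mixnorm s' n m m a (\<lambda>_. 0) \<le> B"
        by (rule core[OF m a0 s1 t1 rel fin B0 H])
      moreover have "mixnorm s' n m m a (\<lambda>_. 0) = mixnorm s n m m a (\<lambda>_. 0)"
        by (rule mixnorm_cong_r) (auto simp: s'_def)
      ultimately show "mixnorm s n m m (\<lambda>J. norm (T (\<lambda>k\<in>{1..m}. x k (J k)))) (\<lambda>_. 0)
          \<le> C * (\<Prod>k=1..m. wnorm K smX (V k) (q k) n (x k))"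
        by (simp add: a_def B_def)
    qed
    then show "C \<in> summing_consts K smX m V s q T"
      using Cpos unfolding summing_consts_def by blast
  qed
  have "summing_consts K smX m V (\<lambda>_. ereal r) p T \<noteq> {}"
    using T by (simp add: multiple_summing_def)
  moreover have "bdd_below (summing_consts K smX m V s q T)"
    by (rule bdd_belowI[of _ 0]) (auto simp: summing_consts_def)
  ultimately show ?thesis
    using sub T unfolding multiple_summing_def pi_norm_def
    by (auto intro: cInf_superset_mono)
qed


end
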